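(* Let $d,p\ge1$, let $\eta:\mathbb R^d\to\mathbb R$ be measurable, let $P_1,\dots,P_d$ be probability distributions on $\mathbb R$, let $\Theta\subset\mathbb R^p$ be compact and $(C_\theta)_{\theta\in\Theta}$ a family of $d$-dimensional copulas; let $P_\theta$ be the distribution on $\mathbb R^d$ with marginals $P_1,\dots,P_d$ and copula $C_\theta$ (joint CDF $C_\theta(F_1(x_1),\dots,F_d(x_d))$, $F_j$ the CDF of $P_j$), and let $G_\theta$ be the CDF of $\eta(\mathbf X)$ for $\mathbf X\sim P_\theta$, with $G_\theta^{-1}(\alpha)=\inf\{y:G_\theta(y)\ge\alpha\}$. Fix $\alpha\in(0,1)$ and assume: (A1) for every $\theta\in\Theta$, $P_\theta$ has a Lebesgue density $f_\theta$ on $\mathbb R^d$ and $C_\theta$ has a Lebesgue density $c_\theta$ on $[0,1]^d$, with $(\theta,\mathbf u)\mapsto c_\theta(\mathbf u)$ continuous on $\Theta\times[0,1]^d$; (A2) for every $\theta\in\Theta$, $G_\theta$ is continuous; (A3) for every $\theta\in\Theta$, $G_\theta$ is strictly increasing, and there is a function $\underline{\epsilon}_\Theta:(0,\infty)\to(0,\infty)$ with $\min\big(G_\theta(y_\theta+\delta)-G_\theta(y_\theta),\,G_\theta(y_\theta)-G_\theta(y_\theta-\delta)\big)\ge\underline{\epsilon}_\Theta(\delta)$ for all $\theta\in\Theta$, $\delta>0$, where $y_\theta=G_\theta^{-1}(\alpha)$. Then the map $\theta\mapsto G_\theta^{-1}(\alpha)$ is continuous on $\Theta$.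
   Context: A $d$-dimensional copula is a CDF on $[0,1]^d$ with uniform marginals. *)

theory Defs
  imports "HOL-Probability.Probability"
begin

definition cdf_vec :: "(real^'d) measure \<Rightarrow> real^'d \<Rightarrow> real" where
  "cdf_vec M x = measure M {y. \<forall>i. y $ i \<le> x $ i}"

definition is_copula :: "(real^'d \<Rightarrow> real) \<Rightarrow> bool" where
  "is_copula C \<longleftrightarrow> (\<exists>\<mu>. prob_space \<mu> \<and> sets \<mu> = sets borel \<and>
      measure \<mu> (UNIV - cbox 0 One) = 0 \<and>
      (\<forall>u\<in>cbox 0 One. C u = cdf_vec \<mu> u) \<and>
      (\<forall>i. \<forall>t\<in>{0..1::real}. measure \<mu> {y. y $ i \<le> t} = t))"

definition push_cdf :: "(real^'d) measure \<Rightarrow> (real^'d \<Rightarrow> real) \<Rightarrow> real \<Rightarrow> real" where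
  "push_cdf M \<eta> y = measure M {x. \<eta> x \<le> y}"

definition gen_inv :: "(real \<Rightarrow> real) \<Rightarrow> real \<Rightarrow> real" where
  "gen_inv G \<alpha> = Inf {y. G y \<ge> \<alpha>}"

end

theory Submission
  imports Defs
begin


definition qf :: "real measure \<Rightarrow> real \<Rightarrow> real" where
  "qf M u = (if 0 < u \<and> u < 1 then Inf {x. u \<le> cdf M x} else 0)"

lemma qf_galois:
  assumes M: "real_distribution M" and u: "0 < u" "u < 1"
  shows "qf M u \<le> t \<longleftrightarrow> u \<le> cdf M t"
proof -
  interpret real_distribution M by fact
  let ?S = "{x. u \<le> cdf M x}"
  have "\<forall>\<^sub>F x in at_top. cdf M x > u"
    using cdf_lim_at_top_prob u(2) by (simp add: order_tendstoD(1))
  then obtain a where "cdf M a > u" by (metis eventually_at_top_linorder order_refl)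
  hence ne: "?S \<noteq> {}" by (auto intro: less_imp_le)
  have "\<forall>\<^sub>F x in at_bot. cdf M x < u"
    using cdf_lim_at_bot u(1) by (simp add: order_tendstoD(2))
  then obtain N where N: "\<And>y. y \<le> N \<Longrightarrow> cdf M y < u" by (metis eventually_at_bot_linorder)
  have bdd: "bdd_below ?S"
    by (rule bdd_belowI[of _ N]) (metis N linorder_not_le mem_Collect_eq order.strict_implies_order not_le)
  have q: "qf M u = Inf ?S" using u by (simp add: qf_def)
  have inS: "u \<le> cdf M (Inf ?S)"
  proof -
    have lim: "(cdf M \<longlongrightarrow> cdf M (Inf ?S)) (at_right (Inf ?S))"
      using cdf_is_right_cont continuous_within by blast
    have ev: "\<forall>\<^sub>F x in at_right (Inf ?S). u \<le> cdf M x"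
    proof -
      have "\<forall>x>Inf ?S. u \<le> cdf M x"
      proof (intro allI impI)
        fix x assume "Inf ?S < x"
        then obtain s where "s \<in> ?S" "s < x" using cInf_less_iff[OF ne bdd] by blast
        thus "u \<le> cdf M x" using cdf_nondecreasing[of s x] by auto
      qed
      thus ?thesis by (intro eventually_at_rightI[of _ "Inf ?S + 1"]) auto
    qed
    show ?thesis by (rule tendsto_lowerbound[OF lim ev]) simp
  qed
  show ?thesis
  proof
    assume "qf M u \<le> t"
    thus "u \<le> cdf M t" using inS cdf_nondecreasing[of "Inf ?S" t] q by auto
  next
    assume "u \<le> cdf M t"
    thus "qf M u \<le> t" using q cInf_lower[OF _ bdd] by auto
  qed
qed

lemma qf_measurable:
  assumes M: "real_distribution M"
  shows "qf M \<in> borel_measurable borel"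
proof -
  have mono: "mono_on {0<..<1} (\<lambda>u. Inf {x. u \<le> cdf M x})"
  proof (rule mono_onI)
    fix r s :: real assume rs: "r \<in> {0<..<1}" "s \<in> {0<..<1}" "r \<le> s"
    show "Inf {x. r \<le> cdf M x} \<le> Inf {x. s \<le> cdf M x}"
      using qf_galois[OF M, of r] qf_galois[OF M, of s] rs
      by (simp add: qf_def) (meson order_trans order_refl)
  qed
  have "(\<lambda>u. indicator {0<..<1} u *\<^sub>R Inf {x. u \<le> cdf M x}) \<in> borel_measurable borel"
    using borel_measurable_mono_on_fnc[OF mono] by (subst (asm) borel_measurable_restrict_space_iff) auto
  moreover have "(\<lambda>u. indicator {0<..<1} u *\<^sub>R Inf {x. u \<le> cdf M x}) = qf M"
    by (auto simp: qf_def indicator_def fun_eq_iff)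
  ultimately show ?thesis by simp
qed



lemma One_nth[simp]: "(One::real^'d::finite) $ i = 1"
  by (metis one_index Cart_1)

lemma hyper_negl: "negligible {u::real^'d::finite. u $ j = c}"
proof -
  have "{u::real^'d. u $ j = c} = {u. u \<bullet> axis j 1 = c}" by (simp add: inner_axis)
  moreover have "negligible {u::real^'d. u \<bullet> axis j 1 = c}"
    by (rule negligible_standard_hyperplane) (auto simp: Basis_vec_def)
  ultimately show ?thesis by simp
qed

lemma One_nth2[simp]: "(\<Sum>x\<in>(Basis::(real^'d::finite) set). x $ i) = 1"
  using One_nth[of i] by simp

definition Tmap :: "('d \<Rightarrow> real measure) \<Rightarrow> real^'d \<Rightarrow> real^'d" where
  "Tmap P u = (\<chi> j. qf (P j) (u $ j))"

lemma Tmap_measurable: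
  fixes P :: "'d::finite \<Rightarrow> real measure"
  assumes "\<And>j. real_distribution (P j)"
  shows "Tmap P \<in> borel_measurable borel"
proof (rule iffD2[OF borel_measurable_euclidean_space], intro ballI)
  fix i :: "real^'d" assume "i \<in> Basis"
  then obtain j where i: "i = axis j 1" by (auto simp: Basis_vec_def)
  have e: "(\<lambda>x. Tmap P x \<bullet> i) = (\<lambda>x. qf (P j) (x $ j))"
    by (simp add: i Tmap_def inner_axis)
  have n: "(\<lambda>x::real^'d. x $ j) \<in> borel_measurable borel"
    by (intro borel_measurable_continuous_onI continuous_intros)
  show "(\<lambda>x. Tmap P x \<bullet> i) \<in> borel_measurable borel"
    unfolding e by (rule measurable_compose[OF n qf_measurable[OF assms]])
qed

lemma negl_bd: "negligible (\<Union>(j::'d::finite). {u::real^'d. u $ j = 0} \<union> {u. u $ j = 1})"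
proof -
  have "negligible (\<Union>((\<lambda>j. {u::real^'d. u $ j = 0} \<union> {u. u $ j = 1}) ` UNIV))"
    by (rule negligible_Union) (auto intro: hyper_negl)
  thus ?thesis by simp
qed

lemma rep:
  fixes P :: "'d::finite \<Rightarrow> real measure" and Pt :: "(real^'d) measure"
    and cc :: "real^'d \<Rightarrow> real" and CC :: "real^'d \<Rightarrow> real"
  assumes marg: "\<And>j. prob_space (P j) \<and> sets (P j) = sets borel"
    and Pt: "prob_space Pt" "sets Pt = sets borel" "\<forall>x. cdf_vec Pt x = CC (\<chi> j. cdf (P j) (x $ j))"
    and cnn: "\<forall>u\<in>cbox 0 One. cc u \<ge> 0 \<and> (cc has_integral CC u) (cbox 0 u)"
    and ccont: "continuous_on (cbox 0 One) cc"
  shows "Pt = distr (density lborel (\<lambda>u. ennreal (indicator (box 0 One) u * cc u))) borel (Tmap P)"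
proof -
  have RD: "\<And>j. real_distribution (P j)"
    using marg by (simp add: real_distribution_def real_distribution_axioms_def)
  have Tm: "Tmap P \<in> borel_measurable borel" by (rule Tmap_measurable[OF RD])
  have gm: "(\<lambda>u. indicator (box 0 One) u * cc u) \<in> borel_measurable borel"
  proof -
    have "(\<lambda>u. indicator (cbox 0 One) u *\<^sub>R cc u) \<in> borel_measurable borel"
      by (rule borel_measurable_continuous_on_indicator[OF _ ccont]) simp
    hence "(\<lambda>u. indicator (box 0 One) u *\<^sub>R (indicator (cbox 0 One) u *\<^sub>R cc u)) \<in> borel_measurable borel"
      by measurable
    moreover have "(\<lambda>u. indicator (box 0 One) u *\<^sub>R (indicator (cbox 0 One) u *\<^sub>R cc u)) = (\<lambda>u. indicator (box 0 One) u * cc u)"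
      using box_subset_cbox[of 0 One] by (auto simp: indicator_def fun_eq_iff)
    ultimately show ?thesis by simp
  qed
  let ?\<nu> = "density lborel (\<lambda>u. ennreal (indicator (box 0 One) u * cc u))"
  let ?E = "range (\<lambda>a::real^'d. {..a})"
  show ?thesis
  proof (rule measure_eqI_generator_eq[where E = ?E and \<Omega> = UNIV and A = "\<lambda>i. {..real i *\<^sub>R One}"])
    show "Int_stable ?E"
    proof (rule Int_stableI)
      fix a b assume "a \<in> ?E" "b \<in> ?E"
      then obtain x y where "a = {..x}" "b = {..y}" by auto
      hence "a \<inter> b = {..inf x y}" by auto
      thus "a \<inter> b \<in> ?E" by auto
    qed
    show "?E \<subseteq> Pow UNIV" by auto
    have sb: "sets (borel :: (real^'d) measure) = sigma_sets UNIV ?E"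
      by (subst borel_eq_atMost) (simp add: sets_measure_of)
    show "sets Pt = sigma_sets UNIV ?E" using Pt(2) sb by simp
    show "sets (distr ?\<nu> borel (Tmap P)) = sigma_sets UNIV ?E" using sb by simp
    show "range (\<lambda>i. {..real i *\<^sub>R One}) \<subseteq> ?E" by auto
    show "(\<Union>i. {..real i *\<^sub>R (One::real^'d)}) = UNIV"
    proof safe
      fix x :: "real^'d"
      obtain n :: nat where n: "norm x \<le> real n" using real_arch_simple by blast
      have xi: "x$i \<le> real n" for i using component_le_norm_cart[of x i] n by linarith
      have "x \<le> real n *\<^sub>R One"
        unfolding less_eq_vec_def vector_scaleR_component One_nth using xi by simp
      thus "x \<in> (\<Union>i. {..real i *\<^sub>R One})" by auto
    qed auto
    show "emeasure Pt {..real i *\<^sub>R One} \<noteq> \<infinity>" for i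
      using Pt(1) by (simp add: prob_space_def finite_measure.emeasure_finite)
    fix X assume "X \<in> ?E"
    then obtain x where X: "X = {..x}" by auto
    define v where "v = (\<chi> j. cdf (P j) (x $ j))"
    have v01: "v \<in> cbox 0 One"
      using finite_borel_measure.cdf_nonneg[OF real_distribution.finite_borel_measure_M[OF RD]] real_distribution.cdf_bounded_prob[OF RD]
      by (auto simp: v_def mem_box_cart)
    have TX: "Tmap P -` X \<in> sets borel" using measurable_sets_borel[OF Tm] X by simp
    define S where "S = {u \<in> box 0 One. \<forall>j. u $ j \<le> v $ j}"
    have Ssub: "S \<subseteq> cbox 0 v"
    proof
      fix u assume "u \<in> S"
      hence a: "\<forall>i. 0 < u$i \<and> u$i < 1" "\<forall>j. u$j \<le> v$j" by (auto simp: S_def mem_box_cart)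
      have "0 \<le> u$i \<and> u$i \<le> v$i" for i using a[rule_format, of i] by simp
      thus "u \<in> cbox 0 v" by (simp add: mem_box_cart)
    qed
    have "emeasure Pt X = ennreal (measure Pt X)"
      using finite_measure.emeasure_eq_measure[OF prob_space.axioms(1)[OF Pt(1)]] by simp
    also have "measure Pt X = cdf_vec Pt x"
      by (simp add: X cdf_vec_def less_eq_vec_def atMost_def)
    also have "\<dots> = CC v" using Pt(3) v_def by simp
    also have "ennreal (CC v) = integral\<^sup>N lborel (\<lambda>u. ennreal (cc u) * indicator S u)"
    proof (rule nn_integral_has_integral_lebesgue'[symmetric])
      show "\<And>u. u \<in> S \<Longrightarrow> 0 \<le> cc u"
        using cnn box_subset_cbox[of 0 One] by (auto simp: S_def)
      have "(cc has_integral CC v) (cbox 0 v)" using cnn v01 by auto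
      moreover have "negligible {u \<in> cbox 0 v - S. cc u \<noteq> 0}"
        apply (rule negligible_subset[OF negl_bd])
        using v01 by (auto simp: S_def mem_box_cart less_le) (metis order_trans)
      moreover have "negligible {u \<in> S - cbox 0 v. cc u \<noteq> 0}"
        by (rule negligible_subset[of "{}"]) (use Ssub in auto)
      ultimately show "(cc has_integral CC v) S"
        using has_integral_spike_set_eq by blast
    qed
    also have "\<dots> = integral\<^sup>N lborel (\<lambda>u. ennreal (indicator (box 0 One) u * cc u) * indicator (Tmap P -` X) u)"
    proof (rule nn_integral_cong)
      fix u :: "real^'d"
      show "ennreal (cc u) * indicator S u = ennreal (indicator (box 0 One) u * cc u) * indicator (Tmap P -` X) u"
      proof (cases "u \<in> box 0 One")
        case True
        hence "\<forall>j. 0 < u $ j \<and> u $ j < 1" by (simp add: mem_box_cart)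
        hence "u \<in> S \<longleftrightarrow> u \<in> Tmap P -` X"
          using qf_galois[OF RD] by (simp add: S_def X Tmap_def v_def less_eq_vec_def True)
        thus ?thesis using True by (auto simp: indicator_def)
      next
        case False
        thus ?thesis by (auto simp: S_def indicator_def)
      qed
    qed
    also have "\<dots> = emeasure ?\<nu> (Tmap P -` X)"
      by (rule emeasure_density[symmetric]) (use gm Tm TX in auto)
    also have "\<dots> = emeasure (distr ?\<nu> borel (Tmap P)) X"
      by (subst emeasure_distr) (use Tm X in auto)
    finally show "emeasure Pt X = emeasure (distr ?\<nu> borel (Tmap P)) X" .
  qed
qed



lemma meas_density_int:
  fixes g :: "'a::euclidean_space \<Rightarrow> real"
  assumes gi: "integrable lborel g" and gn: "\<And>u. g u \<ge> 0" and B: "B \<in> sets borel"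
  shows "measure (density lborel (\<lambda>u. ennreal (g u))) B = (LINT u|lborel. indicator B u * g u)"
proof -
  have gm: "g \<in> borel_measurable borel" using borel_measurable_integrable[OF gi] by simp
  have ib: "integrable lborel (\<lambda>u. indicator B u * g u)"
    using integrable_mult_indicator[of B lborel g] gi B by simp
  have "emeasure (density lborel (\<lambda>u. ennreal (g u))) B = (\<integral>\<^sup>+ u. ennreal (g u) * indicator B u \<partial>lborel)"
    by (rule emeasure_density) (use gm B in auto)
  also have "\<dots> = (\<integral>\<^sup>+ u. ennreal (indicator B u * g u) \<partial>lborel)"
    by (rule nn_integral_cong) (auto simp: indicator_def)
  also have "\<dots> = ennreal (LINT u|lborel. indicator B u * g u)"
    by (rule nn_integral_eq_integral[OF ib]) (use gn in \<open>auto simp: indicator_def\<close>)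
  finally show ?thesis
    by (simp add: measure_def gn)
qed

theorem proposition2:
  fixes \<eta> :: "real^'d \<Rightarrow> real"
    and P :: "'d \<Rightarrow> real measure"
    and \<Theta> :: "(real^'p) set"
    and C :: "real^'p \<Rightarrow> real^'d \<Rightarrow> real"
    and c :: "real^'p \<Rightarrow> real^'d \<Rightarrow> real"
    and P\<theta> :: "real^'p \<Rightarrow> (real^'d) measure"
    and \<alpha> :: real
  assumes eta_meas: "\<eta> \<in> borel_measurable borel"
    and marg: "\<And>j. prob_space (P j) \<and> sets (P j) = sets borel"
    and Theta_compact: "compact \<Theta>"
    and copula: "\<And>\<theta>. \<theta> \<in> \<Theta> \<Longrightarrow> is_copula (C \<theta>)"
    and P_theta: "\<And>\<theta>. \<theta> \<in> \<Theta> \<Longrightarrow> prob_space (P\<theta> \<theta>) \<and> sets (P\<theta> \<theta>) = sets borel \<and>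
        (\<forall>x. cdf_vec (P\<theta> \<theta>) x = C \<theta> (\<chi> j. cdf (P j) (x $ j)))"
    and alpha: "0 < \<alpha>" "\<alpha> < 1"
    and A1_f: "\<And>\<theta>. \<theta> \<in> \<Theta> \<Longrightarrow> \<exists>f :: real^'d \<Rightarrow> ennreal.
        f \<in> borel_measurable borel \<and> P\<theta> \<theta> = density lborel f"
    and A1_c: "\<And>\<theta>. \<theta> \<in> \<Theta> \<Longrightarrow> (\<forall>u\<in>cbox 0 One. c \<theta> u \<ge> 0 \<and>
        (c \<theta> has_integral C \<theta> u) (cbox 0 u))"
    and A1_cont: "continuous_on (\<Theta> \<times> cbox 0 One) (\<lambda>(\<theta>, u). c \<theta> u)"
    and A2: "\<And>\<theta>. \<theta> \<in> \<Theta> \<Longrightarrow> continuous_on UNIV (push_cdf (P\<theta> \<theta>) \<eta>)"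
    and A3_mono: "\<And>\<theta>. \<theta> \<in> \<Theta> \<Longrightarrow> strict_mono (push_cdf (P\<theta> \<theta>) \<eta>)"
    and A3_unif: "\<exists>\<epsilon> :: real \<Rightarrow> real. (\<forall>\<delta>>0. \<epsilon> \<delta> > 0) \<and>
        (\<forall>\<theta>\<in>\<Theta>. \<forall>\<delta>>0.
          let G = push_cdf (P\<theta> \<theta>) \<eta>; y = gen_inv G \<alpha> in
          min (G (y + \<delta>) - G y) (G y - G (y - \<delta>)) \<ge> \<epsilon> \<delta>)"
  shows "continuous_on \<Theta> (\<lambda>\<theta>. gen_inv (push_cdf (P\<theta> \<theta>) \<eta>) \<alpha>)"
proof -
  obtain \<epsilon> :: "real \<Rightarrow> real" where epos: "\<forall>\<delta>>0. \<epsilon> \<delta> > 0" and eb: "\<forall>\<theta>\<in>\<Theta>. \<forall>\<delta>>0.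
          let G = push_cdf (P\<theta> \<theta>) \<eta>; y = gen_inv G \<alpha> in
          min (G (y + \<delta>) - G y) (G y - G (y - \<delta>)) \<ge> \<epsilon> \<delta>"
    using A3_unif by blast
  define T where "T = Tmap P"
  define g where "g \<theta> u = indicator (box 0 One) u * c \<theta> u" for \<theta> u
  define D where "D \<theta> = distr (P\<theta> \<theta>) borel \<eta>" for \<theta>
  have sp: "space (P\<theta> \<theta>) = UNIV" if "\<theta> \<in> \<Theta>" for \<theta>
    using sets_eq_imp_space_eq[of "P\<theta> \<theta>" borel] P_theta[OF that] by simp
  have etam: "\<eta> \<in> measurable (P\<theta> \<theta>) borel" if "\<theta> \<in> \<Theta>" for \<theta>
  proof -
    have "measurable (P\<theta> \<theta>) (borel::real measure) = measurable borel (borel::real measure)"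
      by (rule measurable_cong_sets) (use P_theta[OF that] in auto)
    thus ?thesis using eta_meas by (simp only:)
  qed
  have RD: "real_distribution (D \<theta>)" if "\<theta> \<in> \<Theta>" for \<theta>
  proof -
    interpret prob_space "P\<theta> \<theta>" using P_theta[OF that] by simp
    show ?thesis unfolding D_def by (rule real_distribution_distr[OF etam[OF that]])
  qed
  have Gfun: "push_cdf (P\<theta> \<theta>) \<eta> = cdf (D \<theta>)" if "\<theta> \<in> \<Theta>" for \<theta>
  proof
    fix y
    have "cdf (D \<theta>) y = measure (P\<theta> \<theta>) (\<eta> -` {..y} \<inter> space (P\<theta> \<theta>))"
      unfolding cdf_def D_def by (rule measure_distr[OF etam[OF that]]) simp
    also have "\<dots> = push_cdf (P\<theta> \<theta>) \<eta> y" by (simp add: push_cdf_def sp[OF that] vimage_def)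
    finally show "push_cdf (P\<theta> \<theta>) \<eta> y = cdf (D \<theta>) y" by simp
  qed
  have ginv: "gen_inv (push_cdf (P\<theta> \<theta>) \<eta>) \<alpha> = qf (D \<theta>) \<alpha>" if "\<theta> \<in> \<Theta>" for \<theta>
    using alpha by (simp add: gen_inv_def qf_def Gfun[OF that])
  have cth: "continuous_on (cbox 0 One) (c \<theta>)" if "\<theta> \<in> \<Theta>" for \<theta>
  proof -
    have "continuous_on (cbox 0 One) ((\<lambda>(\<theta>, u). c \<theta> u) \<circ> (\<lambda>u. (\<theta>, u)))"
      by (rule continuous_on_compose[OF _ continuous_on_subset[OF A1_cont]]) (use that in \<open>auto intro!: continuous_intros\<close>)
    thus ?thesis by (simp add: comp_def)
  qed
  have gnn: "g \<theta> u \<ge> 0" if "\<theta> \<in> \<Theta>" for \<theta> u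
    using A1_c[OF that] box_subset_cbox[of 0 One] by (auto simp: g_def indicator_def)
  have gint: "integrable lborel (g \<theta>)" if "\<theta> \<in> \<Theta>" for \<theta>
  proof -
    have "integrable lborel (\<lambda>u. indicator (cbox 0 One) u *\<^sub>R c \<theta> u)"
      by (rule borel_integrable_compact[OF compact_cbox cth[OF that]])
    hence "integrable lborel (\<lambda>u. indicator (box 0 One) u *\<^sub>R (indicator (cbox 0 One) u *\<^sub>R c \<theta> u))"
      using integrable_mult_indicator[of "box 0 One" lborel "\<lambda>u. indicator (cbox 0 One) u *\<^sub>R c \<theta> u"] by simp
    moreover have "(\<lambda>u. indicator (box 0 One) u *\<^sub>R (indicator (cbox 0 One) u *\<^sub>R c \<theta> u)) = g \<theta>"
      using box_subset_cbox[of 0 One] by (auto simp: indicator_def fun_eq_iff g_def)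
    ultimately show ?thesis by simp
  qed
  have RDj: "\<And>j. real_distribution (P j)"
    using marg by (simp add: real_distribution_def real_distribution_axioms_def)
  have Tm: "T \<in> borel_measurable borel" unfolding T_def by (rule Tmap_measurable[OF RDj])
  have Grep: "cdf (D \<theta>) y = (LINT u|lborel. indicator (T -` {x. \<eta> x \<le> y}) u * g \<theta> u)"
    if "\<theta> \<in> \<Theta>" for \<theta> y
  proof -
    have B: "T -` {x. \<eta> x \<le> y} \<in> sets borel"
      using measurable_sets_borel[OF Tm, of "{x. \<eta> x \<le> y}"] eta_meas by measurable
    have eqP: "P\<theta> \<theta> = distr (density lborel (\<lambda>u. ennreal (g \<theta> u))) borel T"
      unfolding g_def T_def
      by (rule rep[OF marg P_theta[OF that, THEN conjunct1] P_theta[OF that, THEN conjunct2, THEN conjunct1]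
          P_theta[OF that, THEN conjunct2, THEN conjunct2] A1_c[OF that] cth[OF that]])
    have "cdf (D \<theta>) y = push_cdf (P\<theta> \<theta>) \<eta> y" using Gfun[OF that] by simp
    also have "\<dots> = measure (distr (density lborel (\<lambda>u. ennreal (g \<theta> u))) borel T) {x. \<eta> x \<le> y}"
      unfolding push_cdf_def using eqP by simp
    also have "\<dots> = measure (density lborel (\<lambda>u. ennreal (g \<theta> u))) (T -` {x. \<eta> x \<le> y})"
      by (subst measure_distr) (use Tm eta_meas in auto)
    also have "\<dots> = (LINT u|lborel. indicator (T -` {x. \<eta> x \<le> y}) u * g \<theta> u)"
      by (rule meas_density_int[OF gint[OF that] gnn[OF that] B])
    finally show ?thesis .
  qed
  have bound: "\<bar>cdf (D \<theta>') y - cdf (D \<theta>) y\<bar> \<le> e"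
    if th: "\<theta> \<in> \<Theta>" "\<theta>' \<in> \<Theta>" and ce: "\<forall>u\<in>cbox 0 One. \<bar>c \<theta>' u - c \<theta> u\<bar> \<le> e" for \<theta> \<theta>' y e
  proof -
    let ?B = "T -` {x. \<eta> x \<le> y}"
    have B: "?B \<in> sets borel"
      using measurable_sets_borel[OF Tm, of "{x. \<eta> x \<le> y}"] eta_meas by measurable
    have i1: "integrable lborel (\<lambda>u. indicator ?B u * g \<theta>' u)"
      using integrable_mult_indicator[OF _ gint[OF th(2)], of ?B] B by simp
    have i2: "integrable lborel (\<lambda>u. indicator ?B u * g \<theta> u)"
      using integrable_mult_indicator[OF _ gint[OF th(1)], of ?B] B by simp
    have fin: "emeasure lborel (box 0 (One::real^'d)) < \<infinity>" by simp
    have i3: "integrable lborel (\<lambda>u. e * indicator (box 0 (One::real^'d)) u)"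
      using integrable_real_indicator[of "box 0 (One::real^'d)" lborel] fin by simp
    have "cdf (D \<theta>') y - cdf (D \<theta>) y = (LINT u|lborel. indicator ?B u * g \<theta>' u - indicator ?B u * g \<theta> u)"
      using Grep[OF th(2)] Grep[OF th(1)] i1 i2 by simp
    also have "\<bar>\<dots>\<bar> \<le> (LINT u|lborel. \<bar>indicator ?B u * g \<theta>' u - indicator ?B u * g \<theta> u\<bar>)"
      by (rule integral_abs_bound)
    also have "\<dots> \<le> (LINT u|lborel. e * indicator (box 0 (One::real^'d)) u)"
    proof (rule integral_mono)
      show "integrable lborel (\<lambda>u. \<bar>indicator ?B u * g \<theta>' u - indicator ?B u * g \<theta> u\<bar>)"
        using i1 i2 by auto
      show "integrable lborel (\<lambda>u. e * indicator (box 0 (One::real^'d)) u)" by (rule i3)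
      fix u :: "real^'d"
      show "\<bar>indicator ?B u * g \<theta>' u - indicator ?B u * g \<theta> u\<bar> \<le> e * indicator (box 0 One) u"
      proof (cases "u \<in> box 0 One")
        case True
        hence "u \<in> cbox 0 One" using box_subset_cbox by blast
        hence h: "\<bar>c \<theta>' u - c \<theta> u\<bar> \<le> e" using ce by blast
        moreover have "0 \<le> e" using h by (meson abs_ge_zero order_trans)
        ultimately show ?thesis using True by (auto simp: g_def indicator_def)
      next
        case False
        thus ?thesis by (simp add: g_def)
      qed
    qed
    also have "\<dots> = e * measure lborel (box 0 (One::real^'d))" by simp
    also have "measure lborel (box 0 (One::real^'d)) = 1"
      by (simp add: measure_lborel_box_eq inner_sum_left inner_Basis)
    finally show ?thesis by simp
  qed
  have gal: "qf (D \<theta>) \<alpha> \<le> t \<longleftrightarrow> \<alpha> \<le> cdf (D \<theta>) t" if "\<theta> \<in> \<Theta>" for \<theta> t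
    using qf_galois[OF RD[OF that]] alpha by blast
  have ucont: "uniformly_continuous_on (\<Theta> \<times> cbox 0 One) (\<lambda>(\<theta>, u). c \<theta> u)"
    by (rule compact_uniformly_continuous[OF A1_cont compact_Times[OF Theta_compact compact_cbox]])
  show ?thesis
    unfolding continuous_on_iff
  proof (intro ballI allI impI)
    fix \<theta> and e :: real assume th: "\<theta> \<in> \<Theta>" and e: "e > 0"
    define \<delta> where "\<delta> = e / 2"
    have \<delta>: "\<delta> > 0" using e by (simp add: \<delta>_def)
    define \<kappa> where "\<kappa> = \<epsilon> \<delta>"
    have \<kappa>: "\<kappa> > 0" using epos \<delta> by (simp add: \<kappa>_def)
    define y0 where "y0 = qf (D \<theta>) \<alpha>"
    have A3t: "min (cdf (D \<theta>) (y0 + \<delta>) - cdf (D \<theta>) y0) (cdf (D \<theta>) y0 - cdf (D \<theta>) (y0 - \<delta>)) \<ge> \<kappa>"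
    proof -
      have gi2: "gen_inv (cdf (D \<theta>)) \<alpha> = qf (D \<theta>) \<alpha>" using ginv[OF th] Gfun[OF th] by simp
      show ?thesis
        using eb[rule_format, OF th \<delta>] unfolding Let_def Gfun[OF th] gi2 by (simp add: y0_def \<kappa>_def)
    qed
    have ge: "\<alpha> \<le> cdf (D \<theta>) y0" using gal[OF th, of y0] y0_def by simp
    have le: "cdf (D \<theta>) y0 \<le> \<alpha>"
    proof -
      have "continuous_on UNIV (cdf (D \<theta>))" using A2[OF th] Gfun[OF th] by simp
      hence "isCont (cdf (D \<theta>)) y0" by (simp add: continuous_on_eq_continuous_at)
      hence lim: "(cdf (D \<theta>) \<longlongrightarrow> cdf (D \<theta>) y0) (at_left y0)"
        by (simp add: isCont_def filterlim_at_split)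
      have "\<forall>\<^sub>F t in at_left y0. cdf (D \<theta>) t \<le> \<alpha>"
      proof (rule eventually_at_leftI[of "y0 - 1"])
        fix t assume "t \<in> {y0 - 1<..<y0}"
        hence "\<not> qf (D \<theta>) \<alpha> \<le> t" using y0_def by auto
        thus "cdf (D \<theta>) t \<le> \<alpha>" using gal[OF th, of t] by simp
      qed simp
      thus ?thesis by (rule tendsto_upperbound[OF lim]) simp
    qed
    have up: "cdf (D \<theta>) (y0 + \<delta>) \<ge> \<alpha> + \<kappa>" using A3t ge le by linarith
    have lo: "cdf (D \<theta>) (y0 - \<delta>) \<le> \<alpha> - \<kappa>" using A3t ge le by linarith
    obtain d where d: "d > 0" and dd: "\<forall>x\<in>\<Theta> \<times> cbox 0 One. \<forall>x'\<in>\<Theta> \<times> cbox 0 One.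
        dist x' x < d \<longrightarrow> dist ((\<lambda>(\<theta>, u). c \<theta> u) x') ((\<lambda>(\<theta>, u). c \<theta> u) x) < \<kappa> / 2"
      using ucont[unfolded uniformly_continuous_on_def, rule_format, of "\<kappa> / 2"] \<kappa> by auto
    show "\<exists>d>0. \<forall>\<theta>'\<in>\<Theta>. dist \<theta>' \<theta> < d \<longrightarrow>
        dist (gen_inv (push_cdf (P\<theta> \<theta>') \<eta>) \<alpha>) (gen_inv (push_cdf (P\<theta> \<theta>) \<eta>) \<alpha>) < e"
    proof (intro exI[of _ d] conjI ballI impI d)
      fix \<theta>' assume th': "\<theta>' \<in> \<Theta>" and dist: "dist \<theta>' \<theta> < d"
      have ce: "\<forall>u\<in>cbox 0 One. \<bar>c \<theta>' u - c \<theta> u\<bar> \<le> \<kappa> / 2"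
      proof
        fix u :: "real^'d" assume u: "u \<in> cbox 0 One"
        have "dist (\<theta>', u) (\<theta>, u) = dist \<theta>' \<theta>" by (simp add: dist_Pair_Pair)
        hence "dist (c \<theta>' u) (c \<theta> u) < \<kappa> / 2"
          using dd[rule_format, of "(\<theta>, u)" "(\<theta>', u)"] th th' u dist by auto
        thus "\<bar>c \<theta>' u - c \<theta> u\<bar> \<le> \<kappa> / 2" by (simp add: dist_real_def)
      qed
      have b1: "\<bar>cdf (D \<theta>') (y0 + \<delta>) - cdf (D \<theta>) (y0 + \<delta>)\<bar> \<le> \<kappa> / 2"
        by (rule bound[OF th th' ce])
      have b2: "\<bar>cdf (D \<theta>') (y0 - \<delta>) - cdf (D \<theta>) (y0 - \<delta>)\<bar> \<le> \<kappa> / 2"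
        by (rule bound[OF th th' ce])
      have "\<alpha> \<le> cdf (D \<theta>') (y0 + \<delta>)" using b1[unfolded abs_le_iff] up \<kappa> by linarith
      hence "qf (D \<theta>') \<alpha> \<le> y0 + \<delta>" using gal[OF th'] by blast
      moreover have "\<not> \<alpha> \<le> cdf (D \<theta>') (y0 - \<delta>)" using b2[unfolded abs_le_iff] lo \<kappa> by linarith
      hence "\<not> qf (D \<theta>') \<alpha> \<le> y0 - \<delta>" using gal[OF th'] by blast
      ultimately have "dist (qf (D \<theta>') \<alpha>) y0 < e" using \<delta>_def e by (simp add: dist_real_def abs_less_iff)
      thus "dist (gen_inv (push_cdf (P\<theta> \<theta>') \<eta>) \<alpha>) (gen_inv (push_cdf (P\<theta> \<theta>) \<eta>) \<alpha>) < e"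
        using ginv[OF th] ginv[OF th'] y0_def by simp
    qed
  qed
qed

end
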